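(* Let $2\le n\le+\infty$ and let $\{a_i\}_{i=1}^n$ be a non-increasing $n$-tuple (sequence if $n=+\infty$) of positive numbers with $\sum_{i=1}^n a_i\le 1$ and $\sum_{i=1}^n\eta(a_i)<+\infty$. Let $I_n=\mathbb{N}\cap[1,n]$, $b>0$, $c\ge0$, and $$\Omega=\Big\{\{x_i\}_{i=1}^n\ :\ x_1\in[0,c],\ x_i\in\mathbb{R},\ x_{i-1}\le x_i\ \forall i\in I_n\setminus\{1\},\ \sum_{i=1}^n a_ix_i=1\Big\}.$$ Then there exists a unique $n$-tuple $\bar{x}_b=\{x^b_i\}_{i=1}^n$ of nonnegative numbers belonging to $\Omega$ such that $$\sum_{i=1}^n e^{-bx^b_i}=\inf\Big\{\sum_{i=1}^n e^{-bx_i}\ :\ \{x_i\}_{i=1}^n\in\Omega\Big\}.$$ Define $d_k=\sum_{i=k+1}^n a_i$ and $s_k=\sum_{i=k+1}^n\eta(a_i)$ for $k\in\{0\}\cup I_{n-1}$, and the non-increasing family $b_0=\frac{s_0+d_0\ln a_1}{1-cd_0}$ if $cd_0<1$, $b_0=+\infty$ if $cd_0\ge1$; $b_k=s_{k-1}+d_{k-1}\ln a_k$ for $k\in I_n$; $b_n=0$ if $n<+\infty$. Then: <ul> <li>If $b\in[b_1,b_0]\cap(0,+\infty)$, then $x^b_i=\frac1b\left(\frac{b-s_0}{d_0}-\ln a_i\right)$ for $i\in I_n$, and $\sum_{i=1}^n e^{-bx^b_i}=d_0e^{\frac{s_0-b}{d_0}}$.</li> <li>If $b\in[b_{k+1},b_k)\cap(0,+\infty)$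 for some $k\in I_{n-1}$, then $x^b_i=0$ for $1\le i\le k$, $x^b_i=\frac1b\left(\frac{b-s_k}{d_k}-\ln a_i\right)$ for $i\in I_n\setminus\{1,\dots,k\}$, and $\sum_{i=1}^n e^{-bx^b_i}=k+d_ke^{\frac{s_k-b}{d_k}}$.</li> <li>If $b_0<+\infty$ and $b>b_0$, then $x^b_1=c$, $x^b_i=\frac1b\left(\frac{b(1-a_1c)-s_1}{d_1}-\ln a_i\right)$ for $i\in I_n\setminus\{1\}$, and $\sum_{i=1}^n e^{-bx^b_i}=e^{-bc}\left(1+d_1e^{\frac{s_1-b(1-cd_0)}{d_1}}\right)$.</li> </ul> For each $i\in I_n$ the function $b\mapsto x^b_i$ is continuous on $(0,+\infty)$. For any $b>0$ and $c>0$ the infimum above equals $$z_c(b)=\sum_{k=0}^{n-1}\mathbf{1}_{B_k}(b)\left(k+d_ke^{\frac{s_k-b}{d_k}}\right)+\mathbf{1}_{B_c}(b)\,e^{-bc}\left(1+d_1e^{\frac{s_1-b(1-cd_0)}{d_1}}\right),$$ where $B_k=[b_{k+1},b_k)$ for $k\in\{0\}\cup I_{n-1}$ and $B_c=[b_0,+\infty)$. If $c=0$, then $b_1=b_0$ and for any $b>0$ the infimum above equals $$z_0(b)=\sum_{k=1}^{n-1}\mathbf{1}_{B'_k}(b)\left(k+d_ke^{\frac{s_k-b}{d_k}}\right),$$ where $B'_k=[b_{k+1},b_k)$ for $k\in I_{n-1}\setminus\{1\}$ and $B'_1=[b_2,+\infty)$.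
   Context: $\eta(x)=-x\ln x$ for $x>0$, $\eta(0)=0$. An $n$-tuple with $n=+\infty$ means a sequence. Intervals $(a,b]$ with $b=+\infty$ mean $(a,+\infty)$. $\mathbf{1}_B$ denotes the indicator function of a set $B$. *)

theory Defs
  imports "HOL-Analysis.Analysis" "HOL-Library.Extended_Nat" "HOL-Library.Extended_Real"
          "HOL-Library.Extended_Nonnegative_Real"
begin

definition eta :: "real \<Rightarrow> real" where
  "eta x = (if x > 0 then - x * ln x else 0)"

definition Idx :: "enat \<Rightarrow> nat set" where
  "Idx n = {i. 1 \<le> i \<and> enat i \<le> n}"

text \<open>The feasible set Omega. An n-tuple is represented by a function nat \<Rightarrow> real
  which is 0 outside I_n (canonical representative, so that uniqueness is meaningful).\<close>
definition Omega :: "enat \<Rightarrow> (nat \<Rightarrow> real) \<Rightarrow> real \<Rightarrow> (nat \<Rightarrow> real) set" where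
  "Omega n a c = {x. (\<forall>i. i \<notin> Idx n \<longrightarrow> x i = 0) \<and>
      x 1 \<in> {0..c} \<and>
      (\<forall>i\<in>Idx n - {1}. x (i - 1) \<le> x i) \<and>
      (\<lambda>i. a i * x i) summable_on Idx n \<and> (\<Sum>\<^sub>\<infinity>i\<in>Idx n. a i * x i) = 1}"

definition objF :: "enat \<Rightarrow> real \<Rightarrow> (nat \<Rightarrow> real) \<Rightarrow> ennreal" where
  "objF n b x = (\<Sum>\<^sub>\<infinity>i\<in>Idx n. ennreal (exp (- b * x i)))"

definition infval :: "enat \<Rightarrow> (nat \<Rightarrow> real) \<Rightarrow> real \<Rightarrow> real \<Rightarrow> ennreal" where
  "infval n a c b = (INF y\<in>Omega n a c. objF n b y)"

text \<open>The minimiser x^b (well defined by the existence/uniqueness part of the theorem).\<close>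
definition xopt :: "enat \<Rightarrow> (nat \<Rightarrow> real) \<Rightarrow> real \<Rightarrow> real \<Rightarrow> nat \<Rightarrow> real" where
  "xopt n a c b = (THE x. x \<in> Omega n a c \<and> (\<forall>i. 0 \<le> x i) \<and> objF n b x = infval n a c b)"

definition dsum :: "enat \<Rightarrow> (nat \<Rightarrow> real) \<Rightarrow> nat \<Rightarrow> real" where
  "dsum n a k = (\<Sum>\<^sub>\<infinity>i\<in>{i\<in>Idx n. k < i}. a i)"

definition ssum :: "enat \<Rightarrow> (nat \<Rightarrow> real) \<Rightarrow> nat \<Rightarrow> real" where
  "ssum n a k = (\<Sum>\<^sub>\<infinity>i\<in>{i\<in>Idx n. k < i}. eta (a i))"

definition bk :: "enat \<Rightarrow> (nat \<Rightarrow> real) \<Rightarrow> real \<Rightarrow> nat \<Rightarrow> ereal" where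
  "bk n a c k =
     (if k = 0 then
        (if c * dsum n a 0 < 1
         then ereal ((ssum n a 0 + dsum n a 0 * ln (a 1)) / (1 - c * dsum n a 0))
         else \<infinity>)
      else if enat k = n then 0
      else ereal (ssum n a (k - 1) + dsum n a (k - 1) * ln (a k)))"

definition Bset :: "enat \<Rightarrow> (nat \<Rightarrow> real) \<Rightarrow> real \<Rightarrow> nat \<Rightarrow> real set" where
  "Bset n a c k = {t. bk n a c (Suc k) \<le> ereal t \<and> ereal t < bk n a c k}"

definition Bc :: "enat \<Rightarrow> (nat \<Rightarrow> real) \<Rightarrow> real \<Rightarrow> real set" where
  "Bc n a c = {t. bk n a c 0 \<le> ereal t}"

definition Bset' :: "enat \<Rightarrow> (nat \<Rightarrow> real) \<Rightarrow> real \<Rightarrow> nat \<Rightarrow> real set" where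
  "Bset' n a c k = (if k = 1 then {t. bk n a c 2 \<le> ereal t} else Bset n a c k)"

definition zc :: "enat \<Rightarrow> (nat \<Rightarrow> real) \<Rightarrow> real \<Rightarrow> real \<Rightarrow> real" where
  "zc n a c b =
     (\<Sum>\<^sub>\<infinity>k\<in>{k. enat k < n}. indicator (Bset n a c k) b *
          (real k + dsum n a k * exp ((ssum n a k - b) / dsum n a k)))
     + indicator (Bc n a c) b * (exp (- b * c) *
          (1 + dsum n a 1 * exp ((ssum n a 1 - b * (1 - c * dsum n a 0)) / dsum n a 1)))"

definition z0 :: "enat \<Rightarrow> (nat \<Rightarrow> real) \<Rightarrow> real \<Rightarrow> real" where
  "z0 n a b =
     (\<Sum>\<^sub>\<infinity>k\<in>{k. 1 \<le> k \<and> enat k < n}. indicator (Bset' n a 0 k) b *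
          (real k + dsum n a k * exp ((ssum n a k - b) / dsum n a k)))"

end

theory Submission
  imports Defs
begin


lemma ennreal_infsum_eq:
  fixes f :: "'a \<Rightarrow> real"
  assumes "f summable_on A" "\<And>x. x \<in> A \<Longrightarrow> 0 \<le> f x"
  shows "(\<Sum>\<^sub>\<infinity>x\<in>A. ennreal (f x)) = ennreal (\<Sum>\<^sub>\<infinity>x\<in>A. f x)"
proof -
  have "(\<Sum>\<^sub>\<infinity>x\<in>A. ennreal (f x)) = (SUP F\<in>{F. finite F \<and> F \<subseteq> A}. sum (\<lambda>x. ennreal (f x)) F)"
    by (rule nonneg_infsum_complete) simp
  also have "\<dots> = (SUP F\<in>{F. finite F \<and> F \<subseteq> A}. ennreal (sum f F))"
    using assms(2) by (intro SUP_cong refl) (auto intro!: sum_ennreal)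
  also have "\<dots> = ennreal (infsum f A)"
    using infsum_nonneg_is_SUPREMUM_ennreal[OF assms] by simp
  finally show ?thesis .
qed

lemma ennreal_infsum_fin_summable:
  fixes f :: "'a \<Rightarrow> real"
  assumes "\<And>x. x \<in> A \<Longrightarrow> 0 \<le> f x" "(\<Sum>\<^sub>\<infinity>x\<in>A. ennreal (f x)) < \<infinity>"
  shows "f summable_on A"
proof (rule nonneg_bdd_above_summable_on)
  show "\<And>x. x \<in> A \<Longrightarrow> 0 \<le> f x" by fact
  let ?M = "(\<Sum>\<^sub>\<infinity>x\<in>A. ennreal (f x))"
  have "sum f F \<le> enn2real ?M" if "F \<subseteq> A" "finite F" for F
  proof -
    have "ennreal (sum f F) = sum (\<lambda>x. ennreal (f x)) F"
      using that assms(1) by (intro sum_ennreal[symmetric]) auto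
    also have "\<dots> \<le> ?M"
      using that by (subst nonneg_infsum_complete) (auto intro!: SUP_upper)
    finally have "ennreal (sum f F) \<le> ?M" .
    then show ?thesis using assms(2)
      by (metis enn2real_ennreal enn2real_mono sum_nonneg assms(1) subsetD that(1) infinity_ennreal_def)
  qed
  then show "bdd_above (sum f ` {F. F \<subseteq> A \<and> finite F})"
    by (auto intro!: bdd_aboveI)
qed

lemma exp_strict: fixes t :: real assumes "t \<noteq> 0" shows "1 + t < exp t"
proof (cases "1 + t/2 \<ge> 0")
  case True
  have "exp t = exp (t/2) * exp (t/2)" by (simp flip: exp_add)
  moreover have "1 + t/2 \<le> exp (t/2)" by simp
  ultimately have "(1 + t/2) * (1 + t/2) \<le> exp t" using True by (metis mult_mono' )
  moreover have tt: "0 < t * t" using assms by (metis not_real_square_gt_zero)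
  moreover have "1 + t < (1 + t/2) * (1 + t/2)" using tt by (simp add: algebra_simps)
  ultimately show ?thesis by linarith
next
  case False
  then have "1 + t < 0" by simp
  then show ?thesis using exp_gt_zero[of t] by linarith
qed

lemma Idx_iff: "i \<in> Idx n \<longleftrightarrow> 1 \<le> i \<and> enat i \<le> n" by (simp add: Idx_def)

lemma summable_diff_real: fixes f g :: "'a \<Rightarrow> real"
  assumes "f summable_on A" "g summable_on A"
  shows "(\<lambda>x. f x - g x) summable_on A"
  using summable_on_add[OF assms(1) summable_on_uminus[of g, THEN iffD2, OF assms(2)]] by simp

lemma infsum_diff_real: fixes f g :: "'a \<Rightarrow> real"
  assumes "f summable_on A" "g summable_on A"
  shows "(\<Sum>\<^sub>\<infinity>x\<in>A. f x - g x) = (\<Sum>\<^sub>\<infinity>x\<in>A. f x) - (\<Sum>\<^sub>\<infinity>x\<in>A. g x)"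
  using infsum_add[OF assms(1) summable_on_uminus[of g, THEN iffD2, OF assms(2)]] infsum_uminus[of g A] by simp

lemma e1: "enat 1 = 1" by (simp add: one_enat_def)
lemma e2: "enat 2 = 2" by (simp add: numeral_eq_enat)

locale L =
  fixes n :: enat and a :: "nat \<Rightarrow> real" and c :: real
  assumes n2: "2 \<le> n"
    and apos: "\<forall>i\<in>Idx n. 0 < a i"
    and anoninc: "\<forall>i\<in>Idx n. \<forall>j\<in>Idx n. i \<le> j \<longrightarrow> a j \<le> a i"
    and asum: "a summable_on Idx n" "(\<Sum>\<^sub>\<infinity>i\<in>Idx n. a i) \<le> 1"
    and eta_sum: "(\<lambda>i. eta (a i)) summable_on Idx n"
    and c0: "0 \<le> c"
begin

abbreviation T where "T k \<equiv> {i\<in>Idx n. k < i}"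
abbreviation F where "F k \<equiv> {i\<in>Idx n. i \<le> k}"
abbreviation d where "d k \<equiv> dsum n a k"
abbreviation s where "s k \<equiv> ssum n a k"
definition bb where "bb k = s (k - 1) + d (k - 1) * ln (a k)"

lemma one_Idx: "1 \<in> Idx n"
proof -
  have "(1::enat) \<le> 2" by simp
  then have "1 \<le> n" using n2 by (rule order_trans)
  then show ?thesis unfolding Idx_iff e1 by simp
qed
lemma two_Idx: "2 \<in> Idx n" using n2 unfolding Idx_iff e2 by simp

lemma a_pos: "i \<in> Idx n \<Longrightarrow> 0 < a i" using apos by auto
lemma a_mono: "i \<in> Idx n \<Longrightarrow> j \<in> Idx n \<Longrightarrow> i \<le> j \<Longrightarrow> a j \<le> a i" using anoninc by auto

lemma a_le1: assumes "i \<in> Idx n" shows "a i \<le> 1"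
proof -
  have "(\<Sum>\<^sub>\<infinity>j\<in>{i}. a j) \<le> (\<Sum>\<^sub>\<infinity>j\<in>Idx n. a j)"
    using assms asum(1) by (intro infsum_mono_neutral) (auto intro!: less_imp_le[OF a_pos])
  then show ?thesis using asum(2) by simp
qed

lemma eta_eq: "i \<in> Idx n \<Longrightarrow> eta (a i) = - a i * ln (a i)" using a_pos by (simp add: eta_def)

lemma eta_nonneg: assumes "i \<in> Idx n" shows "0 \<le> eta (a i)"
proof -
  have "ln (a i) \<le> 0" using a_pos[OF assms] a_le1[OF assms] by simp
  then have "0 \<le> a i * (- ln (a i))" using a_pos[OF assms] by (intro mult_nonneg_nonneg) auto
  then show ?thesis by (simp add: eta_eq[OF assms])
qed

lemma sumT_a: "a summable_on T k" by (rule summable_on_subset_banach[OF asum(1)]) auto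
lemma sumT_eta: "(\<lambda>i. eta (a i)) summable_on T k" by (rule summable_on_subset_banach[OF eta_sum]) auto

lemma d_nonneg: "0 \<le> d k" unfolding dsum_def by (intro infsum_nonneg) (auto intro!: less_imp_le[OF a_pos])
lemma s_nonneg: "0 \<le> s k" unfolding ssum_def using eta_nonneg by (intro infsum_nonneg) auto

lemma T_insert: assumes "Suc k \<in> Idx n" shows "T k = insert (Suc k) (T (Suc k))"
  using assms by auto

lemma d_step: assumes "Suc k \<in> Idx n" shows "d k = a (Suc k) + d (Suc k)"
  unfolding dsum_def T_insert[OF assms] by (subst infsum_insert) (auto intro: sumT_a)

lemma s_step: assumes "Suc k \<in> Idx n" shows "s k = eta (a (Suc k)) + s (Suc k)"
  unfolding ssum_def T_insert[OF assms] by (subst infsum_insert) (auto intro: sumT_eta)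

lemma T_empty: assumes "Suc k \<notin> Idx n" shows "T k = {}"
proof -
  { fix i assume i: "i \<in> Idx n" "k < i"
    then have "enat (Suc k) \<le> enat i" by simp
    also have "\<dots> \<le> n" using i by (simp add: Idx_iff)
    finally have False using assms by (simp add: Idx_iff) }
  then show ?thesis by auto
qed

lemma d_empty: "Suc k \<notin> Idx n \<Longrightarrow> d k = 0" unfolding dsum_def by (simp add: T_empty)
lemma s_empty: "Suc k \<notin> Idx n \<Longrightarrow> s k = 0" unfolding ssum_def by (simp add: T_empty)

lemma lt_n_Idx: "enat k < n \<Longrightarrow> Suc k \<in> Idx n"
  by (simp add: Idx_iff Suc_ile_eq)

lemma d_pos: "enat k < n \<Longrightarrow> 0 < d k"
  using d_step[OF lt_n_Idx] a_pos[OF lt_n_Idx] d_nonneg by (metis add_pos_nonneg)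

lemma F_finite: "finite (F k)" by (rule finite_subset[of _ "{..k}"]) auto

lemma F_T_disj: "F k \<inter> T k = {}" by auto
lemma F_T_Un: "Idx n = F k \<union> T k" by auto

lemma split_sum: fixes f :: "nat \<Rightarrow> real" assumes "f summable_on Idx n"
  shows "(\<Sum>\<^sub>\<infinity>i\<in>Idx n. f i) = sum f (F k) + (\<Sum>\<^sub>\<infinity>i\<in>T k. f i)"
proof -
  have s2: "f summable_on T k" by (rule summable_on_subset_banach[OF assms]) auto
  have "(\<Sum>\<^sub>\<infinity>i\<in>Idx n. f i) = (\<Sum>\<^sub>\<infinity>i\<in>F k. f i) + (\<Sum>\<^sub>\<infinity>i\<in>T k. f i)"
    by (subst F_T_Un[of k], rule infsum_Un_disjoint[OF summable_on_finite[OF F_finite] s2 F_T_disj])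
  then show ?thesis using F_finite by simp
qed

lemma summable_from_T: fixes f :: "nat \<Rightarrow> real" assumes "f summable_on T k" shows "f summable_on Idx n"
  by (subst F_T_Un[of k], rule summable_on_Un_disjoint[OF summable_on_finite[OF F_finite] assms F_T_disj])


lemma sum_rep: "s m + d m * q = (\<Sum>\<^sub>\<infinity>i\<in>T m. a i * (q - ln (a i)))"
proof -
  have "(\<Sum>\<^sub>\<infinity>i\<in>T m. a i * (q - ln (a i))) = (\<Sum>\<^sub>\<infinity>i\<in>T m. eta (a i) + a i * q)"
    by (rule infsum_cong) (simp add: eta_eq algebra_simps)
  also have "\<dots> = s m + (\<Sum>\<^sub>\<infinity>i\<in>T m. a i * q)"
    unfolding ssum_def by (rule infsum_add[OF sumT_eta summable_on_cmult_left[OF sumT_a]])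
  also have "(\<Sum>\<^sub>\<infinity>i\<in>T m. a i * q) = d m * q"
    unfolding dsum_def by (rule infsum_cmult_left')
  finally show ?thesis by simp
qed

lemma bb_nonneg: assumes "1 \<le> j" shows "0 \<le> bb j"
proof -
  have "bb j = (\<Sum>\<^sub>\<infinity>i\<in>T (j - 1). a i * (ln (a j) - ln (a i)))"
    unfolding bb_def by (rule sum_rep)
  also have "\<dots> \<ge> 0"
  proof (rule infsum_nonneg)
    fix i assume i: "i \<in> T (j - 1)"
    then have ij: "j \<le> i" using assms by auto
    have jI: "j \<in> Idx n" using i ij assms by (auto simp: Idx_iff intro: order_trans[of _ "enat i"])
    have iI: "i \<in> Idx n" using i by auto
    have "a i \<le> a j" using a_mono[OF jI iI ij] by auto
    then have "ln (a i) \<le> ln (a j)" using ln_le_cancel_iff[OF a_pos[OF iI] a_pos[OF jI]] by simp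
    then have h2: "0 \<le> ln (a j) - ln (a i)" by linarith
    have h1: "0 \<le> a i" using a_pos[OF iI] by (rule less_imp_le)
    show "0 \<le> a i * (ln (a j) - ln (a i))" by (rule mult_nonneg_nonneg[OF h1 h2])
  qed
  finally show ?thesis .
qed

lemma bb_Idx: assumes "k \<in> Idx n" shows "bb k = s k + d k * ln (a k)"
proof -
  have k1: "Suc (k - 1) = k" using assms by (auto simp: Idx_iff)
  have "d (k - 1) = a k + d k" using d_step[of "k - 1"] k1 assms by simp
  moreover have "s (k - 1) = eta (a k) + s k" using s_step[of "k - 1"] k1 assms by simp
  ultimately show ?thesis unfolding bb_def using eta_eq[OF assms] by (simp add: algebra_simps)
qed

lemma bb_Suc: "bb (Suc k) = s k + d k * ln (a (Suc k))" by (simp add: bb_def)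

lemma bb_mono: assumes "1 \<le> k" shows "bb (Suc k) \<le> bb k"
proof (cases "Suc k \<in> Idx n")
  case True
  then have kI: "k \<in> Idx n" using assms by (auto simp: Idx_iff intro: order_trans[of _ "enat (Suc k)"])
  have "a (Suc k) \<le> a k" using a_mono[OF kI True] by simp
  then have "ln (a (Suc k)) \<le> ln (a k)" using ln_le_cancel_iff[OF a_pos[OF True] a_pos[OF kI]] by simp
  then have "d k * ln (a (Suc k)) \<le> d k * ln (a k)" using d_nonneg by (rule mult_left_mono)
  then show ?thesis by (simp add: bb_Suc bb_Idx[OF kI])
next
  case False
  then show ?thesis using bb_nonneg[OF assms] by (simp add: bb_Suc d_empty s_empty)
qed

lemma bk_eq: assumes "1 \<le> k" shows "bk n a c k = ereal (bb k)"
proof (cases "enat k = n")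
  case True
  then have kI: "k \<in> Idx n" using assms by (simp add: Idx_iff)
  have "Suc k \<notin> Idx n" unfolding Idx_iff True[symmetric] by simp
  then have "bb k = 0" by (simp add: bb_Idx[OF kI] d_empty s_empty)
  then show ?thesis using True assms by (simp add: bk_def)
next
  case False
  then show ?thesis using assms by (simp add: bk_def bb_def)
qed

lemma bk0: "bk n a c 0 = (if c * d 0 < 1 then ereal (bb 1 / (1 - c * d 0)) else \<infinity>)"
  by (simp add: bk_def bb_def)

lemma bk_Suc_le: "bk n a c (Suc k) \<le> bk n a c k"
proof (cases k)
  case 0
  have b1: "0 \<le> bb 1" by (rule bb_nonneg) simp
  have "ereal (bb 1) \<le> bk n a c 0"
  proof (cases "c * d 0 < 1")
    case True
    have cd: "0 \<le> c * d 0" using c0 d_nonneg by simp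
    have "bb 1 * (1 - c * d 0) \<le> bb 1" using b1 cd by (simp add: mult_left_le)
    then have "bb 1 \<le> bb 1 / (1 - c * d 0)" using True by (simp add: le_divide_eq)
    then show ?thesis using True by (simp add: bk0)
  qed (simp add: bk0)
  then show ?thesis using 0 by (simp add: bk_eq)
next
  case (Suc m)
  then show ?thesis using bb_mono[of k] by (simp add: bk_eq)
qed

lemma bk_antimono: "j \<le> k \<Longrightarrow> bk n a c k \<le> bk n a c j"
  by (rule lift_Suc_antimono_le[of "bk n a c"]) (auto intro: bk_Suc_le)

lemma bb_small: assumes "0 < \<epsilon>" shows "\<exists>K\<ge>1. enat K \<le> n \<and> bb K < \<epsilon>"
proof (cases n)
  case (enat N)
  then have N2: "2 \<le> N" using n2 e2 by (metis enat_ord_simps(1))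
  then have "bk n a c N = 0" using enat by (simp add: bk_def)
  then have "bb N = 0" using bk_eq[of N] N2 by simp
  then show ?thesis using N2 enat assms by (intro exI[of _ N]) auto
next
  case infinity
  let ?S = "(\<Sum>\<^sub>\<infinity>i\<in>Idx n. eta (a i))"
  obtain X where X: "finite X" "X \<subseteq> Idx n" "dist (sum (\<lambda>i. eta (a i)) X) ?S \<le> \<epsilon>/2"
    using infsum_finite_approximation[OF eta_sum, of "\<epsilon>/2"] assms by auto
  define m where "m = Max (insert 0 X)"
  have Xm: "X \<subseteq> F m" using X unfolding m_def by auto
  have "sum (\<lambda>i. eta (a i)) X \<le> sum (\<lambda>i. eta (a i)) (F m)"
    using Xm F_finite eta_nonneg by (intro sum_mono2) auto
  moreover have "?S = sum (\<lambda>i. eta (a i)) (F m) + s m"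
    unfolding ssum_def by (rule split_sum[OF eta_sum])
  moreover have "\<bar>sum (\<lambda>i. eta (a i)) X - ?S\<bar> \<le> \<epsilon>/2" using X(3) by (simp add: dist_real_def)
  ultimately have sm: "s m \<le> \<epsilon>/2" using abs_ge_minus_self[of "sum (\<lambda>i. eta (a i)) X - ?S"] by linarith
  have KI: "Suc m \<in> Idx n" using infinity by (simp add: Idx_iff)
  have "ln (a (Suc m)) \<le> 0" using a_pos[OF KI] a_le1[OF KI] by simp
  then have "d m * ln (a (Suc m)) \<le> 0" using d_nonneg by (simp add: mult_nonneg_nonpos)
  then have "bb (Suc m) < \<epsilon>" using sm assms by (simp add: bb_Suc)
  then show ?thesis using infinity by (intro exI[of _ "Suc m"]) auto
qed

lemma coverage: assumes "0 < b"
  shows "bk n a c 0 \<le> ereal b \<or> (\<exists>k. enat k < n \<and> bk n a c (Suc k) \<le> ereal b \<and> ereal b < bk n a c k)"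
proof (cases "bk n a c 0 \<le> ereal b")
  case False
  obtain K where K: "1 \<le> K" "enat K \<le> n" "bb K < b" using bb_small[OF assms] by auto
  have PK: "bk n a c K \<le> ereal b" using K by (simp add: bk_eq)
  define j where "j = (LEAST j. bk n a c j \<le> ereal b)"
  have Pj: "bk n a c j \<le> ereal b" unfolding j_def by (rule LeastI[of "\<lambda>j. bk n a c j \<le> ereal b", OF PK])
  have jK: "j \<le> K" unfolding j_def by (rule Least_le[of "\<lambda>j. bk n a c j \<le> ereal b", OF PK])
  have "j \<noteq> 0" proof
    assume "j = 0"
    with Pj have "bk n a c 0 \<le> ereal b" by (simp only:)
    with False show False by contradiction
  qed
  then obtain k where jk: "j = Suc k" by (cases j) auto
  have "\<not> bk n a c k \<le> ereal b" using not_less_Least[of k "\<lambda>j. bk n a c j \<le> ereal b"] jk unfolding j_def by auto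
  moreover have "enat k < n"
  proof -
    have "enat j \<le> enat K" using jK by simp
    then have "enat j \<le> n" using K(2) by (rule order_trans)
    then show ?thesis using jk by (simp add: Suc_ile_eq)
  qed
  ultimately show ?thesis using Pj jk by auto
qed simp

lemma Omega_nonneg: assumes "x \<in> Omega n a c" shows "0 \<le> x i"
proof (induction i)
  case 0
  have "0 \<notin> Idx n" by (simp add: Idx_iff)
  then show ?case using assms by (simp add: Omega_def)
next
  case (Suc j)
  show ?case
  proof (cases "Suc j \<in> Idx n")
    case False then show ?thesis using assms by (simp add: Omega_def)
  next
    case True
    show ?thesis
    proof (cases "j = 0")
      case True then show ?thesis using assms by (simp add: Omega_def)
    next
      case False
      have mem: "Suc j \<in> Idx n - {1}" using True False by simp
      have "\<forall>i\<in>Idx n - {1}. x (i - 1) \<le> x i" using assms by (simp add: Omega_def)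
      from this[rule_format, OF mem] have "x j \<le> x (Suc j)" by simp
      then show ?thesis using Suc by simp
    qed
  qed
qed

lemma Omega_D: assumes "x \<in> Omega n a c"
  shows "x 1 \<le> c" "(\<lambda>i. a i * x i) summable_on Idx n" "(\<Sum>\<^sub>\<infinity>i\<in>Idx n. a i * x i) = 1"
    "\<And>i. i \<notin> Idx n \<Longrightarrow> x i = 0"
  using assms by (auto simp: Omega_def)


definition Y where "Y k v \<mu> b = (\<lambda>i. if i \<in> Idx n then (if i \<le> k then v else (\<mu> - ln (a i)) / b) else 0)"

lemma F_eq: assumes "enat k < n" shows "F k = {1..k}"
proof -
  { fix i assume i: "1 \<le> i" "i \<le> k"
    then have "enat i \<le> enat k" by simp
    then have "enat i \<le> n" using assms by (meson order_trans less_imp_le) }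
  then show ?thesis by (auto simp: Idx_iff)
qed

lemma G:
  assumes b: "0 < b" and kn: "enat k < n" and v0: "0 \<le> v" and mu: "ln (a (Suc k)) \<le> \<mu>"
    and h1: "1 \<le> k \<Longrightarrow> v \<le> c \<and> v \<le> (\<mu> - ln (a (Suc k))) / b"
    and h0: "k = 0 \<Longrightarrow> (\<mu> - ln (a 1)) / b \<le> c"
    and hs: "v * sum a (F k) + (\<mu> * d k + s k) / b = 1"
    and hw: "\<And>x. x \<in> Omega n a c \<Longrightarrow>
        (\<Sum>i\<in>F k. (b * exp (- b * v) - b * exp (- \<mu>) * a i) * (x i - v)) \<le> 0"
  shows "Y k v \<mu> b \<in> Omega n a c \<and> (\<forall>i. 0 \<le> Y k v \<mu> b i)
     \<and> objF n b (Y k v \<mu> b) = ennreal (real k * exp (- b * v) + exp (- \<mu>) * d k)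
     \<and> (\<forall>x\<in>Omega n a c. objF n b (Y k v \<mu> b) \<le> objF n b x
          \<and> (objF n b x = objF n b (Y k v \<mu> b) \<longrightarrow> x = Y k v \<mu> b))"
proof -
  define y where "y = Y k v \<mu> b"
  have yT: "\<And>i. i \<in> T k \<Longrightarrow> y i = (\<mu> - ln (a i)) / b" by (simp add: y_def Y_def)
  have yF: "\<And>i. i \<in> F k \<Longrightarrow> y i = v" by (simp add: y_def Y_def)
  have yout: "\<And>i. i \<notin> Idx n \<Longrightarrow> y i = 0" by (simp add: y_def Y_def)
  have Sk: "Suc k \<in> Idx n" by (rule lt_n_Idx[OF kn])
  have lnT: "ln (a i) \<le> ln (a (Suc k))" if i: "i \<in> T k" for i
  proof -
    have iI: "i \<in> Idx n" using i by simp
    have "a i \<le> a (Suc k)" using a_mono[OF Sk iI] i by simp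
    then show ?thesis using ln_le_cancel_iff[OF a_pos[OF iI] a_pos[OF Sk]] by simp
  qed
  have ynn: "0 \<le> y i" for i
  proof (cases "i \<in> T k")
    case True
    have "0 \<le> \<mu> - ln (a i)" using lnT[OF True] mu by linarith
    then show ?thesis using b yT[OF True] by simp
  next
    case False
    then show ?thesis using v0 yF yout by (cases "i \<in> Idx n") auto
  qed
  have s1: "(\<lambda>i. \<mu> * a i + eta (a i)) summable_on T k"
    by (intro summable_on_add summable_on_cmult_right sumT_a sumT_eta)
  have i1: "(\<Sum>\<^sub>\<infinity>i\<in>T k. \<mu> * a i + eta (a i)) = \<mu> * d k + s k"
    unfolding dsum_def ssum_def
    by (subst infsum_add[OF summable_on_cmult_right[OF sumT_a] sumT_eta]) (simp add: infsum_cmult_right')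
  have ayT: "a i * y i = (\<mu> * a i + eta (a i)) * (1 / b)" if "i \<in> T k" for i
    using that b by (simp add: yT eta_eq field_simps)
  have ayT_s: "(\<lambda>i. a i * y i) summable_on T k"
    using summable_on_cmult_left[OF s1, of "1/b"] by (subst summable_on_cong[OF ayT]) auto
  have ayT_i: "(\<Sum>\<^sub>\<infinity>i\<in>T k. a i * y i) = (\<mu> * d k + s k) / b"
  proof -
    have "(\<Sum>\<^sub>\<infinity>i\<in>T k. a i * y i) = (\<Sum>\<^sub>\<infinity>i\<in>T k. (\<mu> * a i + eta (a i)) * (1 / b))"
      by (rule infsum_cong) (rule ayT)
    also have "\<dots> = (\<Sum>\<^sub>\<infinity>i\<in>T k. \<mu> * a i + eta (a i)) * (1 / b)" by (rule infsum_cmult_left')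
    finally show ?thesis using i1 by simp
  qed
  have y1: "y 1 \<in> {0..c}"
  proof (cases "k = 0")
    case True
    then have "1 \<in> T k" using one_Idx by simp
    then have "y 1 = (\<mu> - ln (a 1)) / b" by (rule yT)
    then show ?thesis using h0[OF True] ynn[of 1] by simp
  next
    case False
    then have "1 \<in> F k" using one_Idx by simp
    then have "y 1 = v" by (rule yF)
    then show ?thesis using h1 False v0 by simp
  qed
  have ymono: "y (i - 1) \<le> y i" if i: "i \<in> Idx n - {1}" for i
  proof -
    have i2: "2 \<le> i" and iI: "i \<in> Idx n" using i by (auto simp: Idx_iff)
    have i1I: "i - 1 \<in> Idx n"
    proof -
      have "enat (i - 1) \<le> enat i" by simp
      also have "\<dots> \<le> n" using iI by (simp add: Idx_iff)
      finally show ?thesis using i2 by (simp add: Idx_iff)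
    qed
    consider "i \<le> k" | "i = Suc k" | "Suc k < i" by linarith
    then show ?thesis
    proof cases
      case 1
      then show ?thesis using yF[of i] yF[of "i - 1"] iI i1I by simp
    next
      case 2
      then have k1: "1 \<le> k" using i2 by simp
      have "y (i - 1) = v" using yF[of "i - 1"] i1I 2 by simp
      also have "\<dots> \<le> (\<mu> - ln (a (Suc k))) / b" using h1[OF k1] by simp
      also have "\<dots> = y i" using yT[of i] iI 2 by simp
      finally show ?thesis .
    qed (use yT[of i] yT[of "i - 1"] iI i1I a_mono[OF i1I iI] ln_le_cancel_iff[OF a_pos[OF iI] a_pos[OF i1I]] b
         in \<open>auto intro!: divide_right_mono\<close>)
  qed
  have ay_s: "(\<lambda>i. a i * y i) summable_on Idx n" by (rule summable_from_T[OF ayT_s])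
  have ay_i: "(\<Sum>\<^sub>\<infinity>i\<in>Idx n. a i * y i) = 1"
  proof -
    have "sum (\<lambda>i. a i * y i) (F k) = sum (\<lambda>i. v * a i) (F k)" by (rule sum.cong) (simp_all add: yF)
    also have "\<dots> = v * sum a (F k)" by (simp add: sum_distrib_left)
    finally show ?thesis using split_sum[OF ay_s, of k] ayT_i hs by simp
  qed
  have yO: "y \<in> Omega n a c"
    unfolding Omega_def using yout y1 ymono ay_s ay_i by auto
  have eT: "exp (- b * y i) = exp (- \<mu>) * a i" if "i \<in> T k" for i
  proof -
    have iI: "i \<in> Idx n" using that by simp
    have "- b * y i = ln (a i) + - \<mu>" using b yT[OF that] by (simp add: field_simps)
    then have "exp (- b * y i) = exp (ln (a i)) * exp (- \<mu>)" by (simp only: exp_add)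
    then show ?thesis using a_pos[OF iI] by simp
  qed
  have eyT_s: "(\<lambda>i. exp (- b * y i)) summable_on T k"
    using summable_on_cmult_right[OF sumT_a, of "exp (- \<mu>)"] by (subst summable_on_cong[OF eT]) auto
  have eyT_i: "(\<Sum>\<^sub>\<infinity>i\<in>T k. exp (- b * y i)) = exp (- \<mu>) * d k"
    using infsum_cong[OF eT, of "T k"] by (simp add: infsum_cmult_right' dsum_def)
  have ey_s: "(\<lambda>i. exp (- b * y i)) summable_on Idx n" by (rule summable_from_T[OF eyT_s])
  have cardF: "card (F k) = k" using F_eq[OF kn] by simp
  have ey_i: "(\<Sum>\<^sub>\<infinity>i\<in>Idx n. exp (- b * y i)) = real k * exp (- b * v) + exp (- \<mu>) * d k"
  proof -
    have "sum (\<lambda>i. exp (- b * y i)) (F k) = sum (\<lambda>i. exp (- b * v)) (F k)" by (rule sum.cong) (simp_all add: yF)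
    then show ?thesis using split_sum[OF ey_s, of k] eyT_i cardF by simp
  qed
  have objy: "objF n b y = ennreal (real k * exp (- b * v) + exp (- \<mu>) * d k)"
    unfolding objF_def using ennreal_infsum_eq[OF ey_s] ey_i by simp
  define w where "w i = b * exp (- b * y i)" for i
  have wsum: "(\<lambda>i. w i * z i) summable_on Idx n \<and>
      (\<Sum>\<^sub>\<infinity>i\<in>Idx n. w i * z i) = b * exp (- \<mu>) + (\<Sum>i\<in>F k. (b * exp (- b * v) - b * exp (- \<mu>) * a i) * z i)"
    if z: "z \<in> Omega n a c" for z
  proof -
    have az: "(\<lambda>i. a i * z i) summable_on Idx n" "(\<Sum>\<^sub>\<infinity>i\<in>Idx n. a i * z i) = 1" using Omega_D[OF z] by auto
    have azT: "(\<lambda>i. a i * z i) summable_on T k" by (rule summable_on_subset_banach[OF az(1)]) auto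
    have wT: "w i * z i = b * exp (- \<mu>) * (a i * z i)" if "i \<in> T k" for i
      using eT[OF that] by (simp add: w_def)
    have wzT_s: "(\<lambda>i. w i * z i) summable_on T k"
      using summable_on_cmult_right[OF azT, of "b * exp (- \<mu>)"] by (subst summable_on_cong[OF wT]) auto
    have wzT_i: "(\<Sum>\<^sub>\<infinity>i\<in>T k. w i * z i) = b * exp (- \<mu>) * (\<Sum>\<^sub>\<infinity>i\<in>T k. a i * z i)"
      using infsum_cong[OF wT, of "T k"] by (simp add: infsum_cmult_right')
    have aT: "(\<Sum>\<^sub>\<infinity>i\<in>T k. a i * z i) = 1 - (\<Sum>i\<in>F k. a i * z i)"
      using split_sum[OF az(1), of k] az(2) by simp
    have wF: "(\<Sum>i\<in>F k. w i * z i) = (\<Sum>i\<in>F k. b * exp (- b * v) * z i)"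
      by (rule sum.cong) (simp_all add: w_def yF)
    have wz_s: "(\<lambda>i. w i * z i) summable_on Idx n" by (rule summable_from_T[OF wzT_s])
    have "(\<Sum>\<^sub>\<infinity>i\<in>Idx n. w i * z i) = (\<Sum>i\<in>F k. b * exp (- b * v) * z i) + b * exp (- \<mu>) * (1 - (\<Sum>i\<in>F k. a i * z i))"
      using split_sum[OF wz_s, of k] wF wzT_i aT by simp
    also have "\<dots> = b * exp (- \<mu>) + (\<Sum>i\<in>F k. (b * exp (- b * v) - b * exp (- \<mu>) * a i) * z i)"
      by (simp add: sum_subtractf sum_distrib_left algebra_simps left_diff_distrib)
    finally show ?thesis using wz_s by simp
  qed
  have wdiff: "(\<Sum>\<^sub>\<infinity>i\<in>Idx n. w i * x i) - (\<Sum>\<^sub>\<infinity>i\<in>Idx n. w i * y i) \<le> 0" if x: "x \<in> Omega n a c" for x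
  proof -
    have "(\<Sum>i\<in>F k. (b * exp (- b * v) - b * exp (- \<mu>) * a i) * y i) = (\<Sum>i\<in>F k. (b * exp (- b * v) - b * exp (- \<mu>) * a i) * v)"
      by (rule sum.cong) (simp_all add: yF)
    then have "(\<Sum>\<^sub>\<infinity>i\<in>Idx n. w i * x i) - (\<Sum>\<^sub>\<infinity>i\<in>Idx n. w i * y i)
        = (\<Sum>i\<in>F k. (b * exp (- b * v) - b * exp (- \<mu>) * a i) * x i) - (\<Sum>i\<in>F k. (b * exp (- b * v) - b * exp (- \<mu>) * a i) * v)"
      using wsum[OF x] wsum[OF yO] by simp
    also have "\<dots> = (\<Sum>i\<in>F k. (b * exp (- b * v) - b * exp (- \<mu>) * a i) * (x i - v))"
      by (simp add: sum_subtractf right_diff_distrib)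
    finally show ?thesis using hw[OF x] by simp
  qed
  have delta: "exp (- b * x i) - exp (- b * y i) + (w i * x i - w i * y i)
       = exp (- b * y i) * (exp (- b * (x i - y i)) - 1 - (- b * (x i - y i)))" for x i
  proof -
    have "exp (- b * x i) = exp (- b * y i) * exp (- b * (x i - y i))"
      by (simp add: exp_add[symmetric] algebra_simps)
    then show ?thesis by (simp add: w_def algebra_simps)
  qed
  have delta_nn: "0 \<le> exp (- b * y i) * (exp (- b * (x i - y i)) - 1 - (- b * (x i - y i)))" for x i
    using exp_ge_add_one_self[of "- b * (x i - y i)"] by (intro mult_nonneg_nonneg) auto
  have main: "objF n b y \<le> objF n b x \<and> (objF n b x = objF n b y \<longrightarrow> x = y)" if x: "x \<in> Omega n a c" for x
  proof (cases "objF n b x = \<infinity>")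
    case True
    then show ?thesis using objy by simp
  next
    case False
    have ex_s: "(\<lambda>i. exp (- b * x i)) summable_on Idx n"
      using False by (intro ennreal_infsum_fin_summable) (auto simp: objF_def top.not_eq_extremum)
    have objx: "objF n b x = ennreal (\<Sum>\<^sub>\<infinity>i\<in>Idx n. exp (- b * x i))"
      unfolding objF_def using ennreal_infsum_eq[OF ex_s] by simp
    have objy': "objF n b y = ennreal (\<Sum>\<^sub>\<infinity>i\<in>Idx n. exp (- b * y i))"
      unfolding objF_def using ennreal_infsum_eq[OF ey_s] by simp
    have wx_s: "(\<lambda>i. w i * x i) summable_on Idx n" using wsum[OF x] by simp
    have wy_s: "(\<lambda>i. w i * y i) summable_on Idx n" using wsum[OF yO] by simp
    define D where "D i = exp (- b * x i) - exp (- b * y i) + (w i * x i - w i * y i)" for i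
    have D_s: "D summable_on Idx n"
      unfolding D_def by (intro summable_on_add summable_diff_real ex_s ey_s wx_s wy_s)
    have D_i: "(\<Sum>\<^sub>\<infinity>i\<in>Idx n. D i) = ((\<Sum>\<^sub>\<infinity>i\<in>Idx n. exp (- b * x i)) - (\<Sum>\<^sub>\<infinity>i\<in>Idx n. exp (- b * y i)))
        + ((\<Sum>\<^sub>\<infinity>i\<in>Idx n. w i * x i) - (\<Sum>\<^sub>\<infinity>i\<in>Idx n. w i * y i))"
      unfolding D_def
      by (simp only: infsum_add[OF summable_diff_real[OF ex_s ey_s] summable_diff_real[OF wx_s wy_s]]
          infsum_diff_real[OF ex_s ey_s] infsum_diff_real[OF wx_s wy_s])
    have D_nn: "0 \<le> D i" for i unfolding D_def delta by (rule delta_nn)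
    have "0 \<le> (\<Sum>\<^sub>\<infinity>i\<in>Idx n. D i)" by (rule infsum_nonneg) (simp add: D_nn)
    then have le: "(\<Sum>\<^sub>\<infinity>i\<in>Idx n. exp (- b * y i)) \<le> (\<Sum>\<^sub>\<infinity>i\<in>Idx n. exp (- b * x i))"
      using D_i wdiff[OF x] by linarith
    have "objF n b y \<le> objF n b x"
      unfolding objx objy' using le by (rule ennreal_leI)
    moreover have "x = y" if eq: "objF n b x = objF n b y"
    proof -
      have ey0: "0 \<le> (\<Sum>\<^sub>\<infinity>i\<in>Idx n. exp (- b * y i))" by (rule infsum_nonneg) simp
      have ex0: "0 \<le> (\<Sum>\<^sub>\<infinity>i\<in>Idx n. exp (- b * x i))" by (rule infsum_nonneg) simp
      have "ennreal (\<Sum>\<^sub>\<infinity>i\<in>Idx n. exp (- b * x i)) = ennreal (\<Sum>\<^sub>\<infinity>i\<in>Idx n. exp (- b * y i))"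
        using eq unfolding objx objy' .
      then have "(\<Sum>\<^sub>\<infinity>i\<in>Idx n. exp (- b * x i)) = (\<Sum>\<^sub>\<infinity>i\<in>Idx n. exp (- b * y i))"
        using ey0 ex0 by simp
      then have "(\<Sum>\<^sub>\<infinity>i\<in>Idx n. D i) \<le> 0" using D_i wdiff[OF x] by linarith
      then have D0: "D i = 0" if "i \<in> Idx n" for i
        using nonneg_infsum_le_0D[OF _ D_s D_nn that] by simp
      show "x = y"
      proof
        fix i
        show "x i = y i"
        proof (cases "i \<in> Idx n")
          case True
          have "exp (- b * y i) * (exp (- b * (x i - y i)) - 1 - (- b * (x i - y i))) = 0"
            using D0[OF True] unfolding D_def delta .
          then have "exp (- b * (x i - y i)) = 1 + (- b * (x i - y i))" by simp
          then have "- b * (x i - y i) = 0" using exp_strict[of "- b * (x i - y i)"] by fastforce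
          then show ?thesis using b by simp
        next
          case False
          then show ?thesis using Omega_D(4)[OF x] yout by simp
        qed
      qed
    qed
    ultimately show ?thesis by blast
  qed
  show ?thesis using yO ynn objy main unfolding y_def by blast
qed




lemma opt_conseq:
  assumes yO: "y \<in> Omega n a c" and ynn: "\<forall>i. 0 \<le> y i"
    and m: "\<forall>x\<in>Omega n a c. objF n b y \<le> objF n b x \<and> (objF n b x = objF n b y \<longrightarrow> x = y)"
  shows "infval n a c b = objF n b y \<and> xopt n a c b = y
     \<and> (\<exists>!x. x \<in> Omega n a c \<and> (\<forall>i. 0 \<le> x i) \<and> objF n b x = infval n a c b)"
proof -
  have inf: "infval n a c b = objF n b y"
    unfolding infval_def
  proof (rule antisym)
    show "(INF x\<in>Omega n a c. objF n b x) \<le> objF n b y" using yO by (rule INF_lower)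
    show "objF n b y \<le> (INF x\<in>Omega n a c. objF n b x)" using m by (intro INF_greatest) blast
  qed
  have P: "x \<in> Omega n a c \<and> (\<forall>i. 0 \<le> x i) \<and> objF n b x = infval n a c b \<longleftrightarrow> x = y" for x
  proof
    assume h: "x \<in> Omega n a c \<and> (\<forall>i. 0 \<le> x i) \<and> objF n b x = infval n a c b"
    then have "objF n b x = objF n b y" using inf by simp
    then show "x = y" using m h by blast
  next
    assume "x = y"
    then show "x \<in> Omega n a c \<and> (\<forall>i. 0 \<le> x i) \<and> objF n b x = infval n a c b" using yO ynn inf by simp
  qed
  have xo: "xopt n a c b = y" unfolding xopt_def using P by simp
  have ex: "\<exists>!x. x \<in> Omega n a c \<and> (\<forall>i. 0 \<le> x i) \<and> objF n b x = infval n a c b"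
  proof (rule ex1I[of _ y])
    show "y \<in> Omega n a c \<and> (\<forall>i. 0 \<le> y i) \<and> objF n b y = infval n a c b" using P[of y] by simp
  next
    fix x assume "x \<in> Omega n a c \<and> (\<forall>i. 0 \<le> x i) \<and> objF n b x = infval n a c b"
    then show "x = y" using P[of x] by simp
  qed
  show ?thesis using inf xo ex by blast
qed

lemma pieceB:
  assumes b: "0 < b" and kn: "enat k < n" and lo: "bk n a c (Suc k) \<le> ereal b" and hi: "ereal b \<le> bk n a c k"
  shows "xopt n a c b = Y k 0 ((b - s k) / d k) b
    \<and> infval n a c b = ennreal (real k + d k * exp ((s k - b) / d k))
    \<and> objF n b (xopt n a c b) = ennreal (real k + d k * exp ((s k - b) / d k))
    \<and> (\<exists>!x. x \<in> Omega n a c \<and> (\<forall>i. 0 \<le> x i) \<and> objF n b x = infval n a c b)"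
proof -
  define \<mu> where "\<mu> = (b - s k) / d k"
  have dk: "0 < d k" by (rule d_pos[OF kn])
  have Sk: "Suc k \<in> Idx n" by (rule lt_n_Idx[OF kn])
  have "bb (Suc k) \<le> b" using lo by (simp add: bk_eq)
  then have "d k * ln (a (Suc k)) \<le> b - s k" by (simp add: bb_Suc)
  then have mu: "ln (a (Suc k)) \<le> \<mu>" unfolding \<mu>_def using dk by (simp add: pos_le_divide_eq mult.commute)
  have h1: "1 \<le> k \<Longrightarrow> 0 \<le> c \<and> 0 \<le> (\<mu> - ln (a (Suc k))) / b" using c0 mu b by simp
  have h0: "(\<mu> - ln (a 1)) / b \<le> c" if k0: "k = 0"
  proof -
    have d0: "0 < d 0" using dk k0 by simp
    have b1: "0 \<le> bb 1" by (rule bb_nonneg) simp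
    have key: "b - bb 1 \<le> c * b * d 0"
    proof (cases "c * d 0 < 1")
      case True
      then have "b \<le> bb 1 / (1 - c * d 0)" using hi k0 by (simp add: bk0)
      then have "b * (1 - c * d 0) \<le> bb 1" using True by (simp add: le_divide_eq)
      then show ?thesis by (simp add: algebra_simps)
    next
      case False
      then have "b \<le> b * (c * d 0)" using b by simp
      then show ?thesis using b1 by (simp add: algebra_simps)
    qed
    have "\<mu> - ln (a 1) = (b - bb 1) / d 0" unfolding \<mu>_def bb_def using k0 d0 by (simp add: field_simps)
    also have "\<dots> \<le> c * b" using key d0 by (simp add: divide_le_eq mult.commute mult.left_commute)
    finally show ?thesis using b by (simp add: divide_le_eq mult.commute)
  qed
  have hs: "0 * sum a (F k) + (\<mu> * d k + s k) / b = 1" unfolding \<mu>_def using dk b by simp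
  have hw: "(\<Sum>i\<in>F k. (b * exp (- b * 0) - b * exp (- \<mu>) * a i) * (x i - 0)) \<le> 0"
    if x: "x \<in> Omega n a c" for x
  proof (rule sum_nonpos)
    fix i assume i: "i \<in> F k"
    then have k1: "1 \<le> k" and iI: "i \<in> Idx n" and ik: "i \<le> k" by (auto simp: Idx_iff)
    have kI: "k \<in> Idx n" using k1 kn by (simp add: Idx_iff)
    have "b \<le> bb k" using hi k1 by (simp add: bk_eq)
    then have "b - s k \<le> d k * ln (a k)" by (simp add: bb_Idx[OF kI])
    then have "\<mu> \<le> ln (a k)" unfolding \<mu>_def using dk by (simp add: divide_le_eq mult.commute)
    then have "exp \<mu> \<le> a k" using a_pos[OF kI] by (metis exp_le_cancel_iff exp_ln)
    also have "a k \<le> a i" using a_mono[OF iI kI ik] .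
    finally have "1 \<le> exp (- \<mu>) * a i" by (simp add: exp_minus field_simps)
    then have "b * 1 \<le> b * (exp (- \<mu>) * a i)" by (rule mult_left_mono) (rule less_imp_le[OF b])
    then have "b * exp (- b * 0) - b * exp (- \<mu>) * a i \<le> 0" by simp
    then show "(b * exp (- b * 0) - b * exp (- \<mu>) * a i) * (x i - 0) \<le> 0"
      using Omega_nonneg[OF x, of i] by (simp add: mult_nonpos_nonneg)
  qed
  have GG: "Y k 0 \<mu> b \<in> Omega n a c \<and> (\<forall>i. 0 \<le> Y k 0 \<mu> b i)
     \<and> objF n b (Y k 0 \<mu> b) = ennreal (real k * exp (- b * 0) + exp (- \<mu>) * d k)
     \<and> (\<forall>x\<in>Omega n a c. objF n b (Y k 0 \<mu> b) \<le> objF n b x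
          \<and> (objF n b x = objF n b (Y k 0 \<mu> b) \<longrightarrow> x = Y k 0 \<mu> b))"
    by (rule G[OF b kn _ mu h1 h0 hs hw]) simp_all
  have m: "- \<mu> = (s k - b) / d k" unfolding \<mu>_def using dk by (simp add: field_simps)
  have val: "real k * exp (- b * 0) + exp (- \<mu>) * d k = real k + d k * exp ((s k - b) / d k)"
    unfolding m by simp
  have g1: "Y k 0 \<mu> b \<in> Omega n a c" using GG by blast
  have g2: "\<forall>i. 0 \<le> Y k 0 \<mu> b i" using GG by blast
  have g3': "objF n b (Y k 0 \<mu> b) = ennreal (real k * exp (- b * 0) + exp (- \<mu>) * d k)" using GG by blast
  have g3: "objF n b (Y k 0 \<mu> b) = ennreal (real k + d k * exp ((s k - b) / d k))" using g3' unfolding val .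
  have g4: "\<forall>x\<in>Omega n a c. objF n b (Y k 0 \<mu> b) \<le> objF n b x
          \<and> (objF n b x = objF n b (Y k 0 \<mu> b) \<longrightarrow> x = Y k 0 \<mu> b)" using GG by blast
  note OC = opt_conseq[OF g1 g2 g4]
  have o1: "infval n a c b = objF n b (Y k 0 \<mu> b)" using OC by blast
  have o2: "xopt n a c b = Y k 0 \<mu> b" using OC by blast
  have o3: "\<exists>!x. x \<in> Omega n a c \<and> (\<forall>i. 0 \<le> x i) \<and> objF n b x = infval n a c b" using OC by blast
  show ?thesis unfolding \<mu>_def[symmetric] o2
  proof (intro conjI)
    show "infval n a c b = ennreal (real k + d k * exp ((s k - b) / d k))" using o1 g3 by (rule trans)
  qed (rule refl, rule g3, rule o3)
qed

lemma pieceC: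
  assumes b: "0 < b" and hi: "bk n a c 0 \<le> ereal b"
  shows "xopt n a c b = Y 1 c ((b * (1 - a 1 * c) - s 1) / d 1) b
    \<and> infval n a c b = ennreal (exp (- b * c) * (1 + d 1 * exp ((s 1 - b * (1 - c * d 0)) / d 1)))
    \<and> objF n b (xopt n a c b) = ennreal (exp (- b * c) * (1 + d 1 * exp ((s 1 - b * (1 - c * d 0)) / d 1)))
    \<and> (\<exists>!x. x \<in> Omega n a c \<and> (\<forall>i. 0 \<le> x i) \<and> objF n b x = infval n a c b)"
proof -
  define \<mu> where "\<mu> = (b * (1 - a 1 * c) - s 1) / d 1"
  have kn: "enat 1 < n"
  proof -
    have "enat 1 < 2" by (simp add: e1 e2[symmetric] del: enat_numeral)
    then show ?thesis using n2 by (rule less_le_trans)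
  qed
  have d1: "0 < d 1" by (rule d_pos[OF kn])
  have cd: "c * d 0 < 1" using hi by (auto simp: bk0 split: if_splits)
  have "b \<ge> bb 1 / (1 - c * d 0)" using hi cd by (simp add: bk0)
  then have K1: "bb 1 \<le> b * (1 - c * d 0)" using cd by (simp add: divide_le_eq mult.commute)
  have d0: "d 0 = a 1 + d 1" using d_step[of 0] one_Idx by simp
  have bb1: "bb 1 = s 1 + d 1 * ln (a 1)" by (rule bb_Idx[OF one_Idx])
  have bb2: "bb 2 = s 1 + d 1 * ln (a 2)" using bb_Suc[of 1] by (simp add: numeral_2_eq_2)
  have "bb 2 \<le> bb 1" using bb_mono[of 1] by (simp add: numeral_2_eq_2)
  then have K2: "s 1 + d 1 * ln (a 2) \<le> b * (1 - c * d 0)" using K1 bb2 by simp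
  have gen: "c \<le> (\<mu> - ln (a j)) / b" if "s 1 + d 1 * ln (a j) \<le> b * (1 - c * d 0)" for j
  proof -
    have "c * b * d 1 \<le> b * (1 - a 1 * c) - s 1 - d 1 * ln (a j)"
      using that d0 by (simp add: algebra_simps)
    then have "c * b \<le> \<mu> - ln (a j)" unfolding \<mu>_def using d1
      by (simp add: le_divide_eq field_simps)
    then show ?thesis using b by (simp add: le_divide_eq mult.commute)
  qed
  have g2: "c \<le> (\<mu> - ln (a 2)) / b" using gen[OF K2] .
  have g1: "c \<le> (\<mu> - ln (a 1)) / b" using gen[of 1] K1 bb1 by simp
  have mu: "ln (a (Suc 1)) \<le> \<mu>"
  proof -
    have "0 \<le> (\<mu> - ln (a 2)) / b" using g2 c0 by linarith
    then show ?thesis using b by (simp add: zero_le_divide_iff numeral_2_eq_2)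
  qed
  have h1: "c \<le> c \<and> c \<le> (\<mu> - ln (a (Suc 1))) / b" using g2 by (simp add: numeral_2_eq_2)
  have F1: "F 1 = {1}" using F_eq[OF kn] by simp
  have hs: "c * sum a (F 1) + (\<mu> * d 1 + s 1) / b = 1" unfolding F1 \<mu>_def using d1 b by (simp add: field_simps)
  have hw: "(\<Sum>i\<in>F 1. (b * exp (- b * c) - b * exp (- \<mu>) * a i) * (x i - c)) \<le> 0"
    if x: "x \<in> Omega n a c" for x
  proof -
    have "c * b \<le> \<mu> - ln (a 1)" using g1 b by (simp add: le_divide_eq mult.commute)
    then have "ln (a 1) + - \<mu> \<le> - b * c" by (simp add: algebra_simps)
    then have ee: "exp (ln (a 1) + - \<mu>) \<le> exp (- b * c)" by (simp only: exp_le_cancel_iff)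
    have e: "exp (ln (a 1) + - \<mu>) = a 1 * exp (- \<mu>)" by (simp only: exp_add exp_ln[OF a_pos[OF one_Idx]])
    have "a 1 * exp (- \<mu>) \<le> exp (- b * c)" using ee unfolding e .
    then have "b * (exp (- \<mu>) * a 1) \<le> b * exp (- b * c)" using b by (intro mult_left_mono) (auto simp: mult.commute)
    then have "0 \<le> b * exp (- b * c) - b * exp (- \<mu>) * a 1" by simp
    moreover have "x 1 - c \<le> 0" using Omega_D(1)[OF x] by simp
    ultimately show ?thesis unfolding F1 by (simp add: mult_nonneg_nonpos)
  qed
  have GG: "Y 1 c \<mu> b \<in> Omega n a c \<and> (\<forall>i. 0 \<le> Y 1 c \<mu> b i)
     \<and> objF n b (Y 1 c \<mu> b) = ennreal (real 1 * exp (- b * c) + exp (- \<mu>) * d 1)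
     \<and> (\<forall>x\<in>Omega n a c. objF n b (Y 1 c \<mu> b) \<le> objF n b x
          \<and> (objF n b x = objF n b (Y 1 c \<mu> b) \<longrightarrow> x = Y 1 c \<mu> b))"
    by (rule G[OF b kn c0 mu h1 _ hs hw]) simp_all
  have m: "- \<mu> = - b * c + (s 1 - b * (1 - c * d 0)) / d 1"
    unfolding \<mu>_def d0 using d1 by (simp add: field_simps)
  have "exp (- \<mu>) = exp (- b * c) * exp ((s 1 - b * (1 - c * d 0)) / d 1)" unfolding m by (rule exp_add)
  then have val: "real 1 * exp (- b * c) + exp (- \<mu>) * d 1 = exp (- b * c) * (1 + d 1 * exp ((s 1 - b * (1 - c * d 0)) / d 1))"
    by (simp add: algebra_simps)
  have g1: "Y 1 c \<mu> b \<in> Omega n a c" using GG by blast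
  have g2: "\<forall>i. 0 \<le> Y 1 c \<mu> b i" using GG by blast
  have g3': "objF n b (Y 1 c \<mu> b) = ennreal (real 1 * exp (- b * c) + exp (- \<mu>) * d 1)" using GG by blast
  have g3: "objF n b (Y 1 c \<mu> b) = ennreal (exp (- b * c) * (1 + d 1 * exp ((s 1 - b * (1 - c * d 0)) / d 1)))"
    using g3' unfolding val .
  have g4: "\<forall>x\<in>Omega n a c. objF n b (Y 1 c \<mu> b) \<le> objF n b x
          \<and> (objF n b x = objF n b (Y 1 c \<mu> b) \<longrightarrow> x = Y 1 c \<mu> b)" using GG by blast
  note OC = opt_conseq[OF g1 g2 g4]
  have o1: "infval n a c b = objF n b (Y 1 c \<mu> b)" using OC by blast
  have o2: "xopt n a c b = Y 1 c \<mu> b" using OC by blast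
  have o3: "\<exists>!x. x \<in> Omega n a c \<and> (\<forall>i. 0 \<le> x i) \<and> objF n b x = infval n a c b" using OC by blast
  show ?thesis unfolding \<mu>_def[symmetric] o2
  proof (intro conjI)
    show "infval n a c b = ennreal (exp (- b * c) * (1 + d 1 * exp ((s 1 - b * (1 - c * d 0)) / d 1)))" using o1 g3 by (rule trans)
  qed (rule refl, rule g3, rule o3)
qed


lemma infsum_single_nat:
  fixes g :: "nat \<Rightarrow> real"
  assumes "k0 \<in> S" "\<And>k. k \<in> S \<Longrightarrow> k \<noteq> k0 \<Longrightarrow> g k = 0"
  shows "(\<Sum>\<^sub>\<infinity>k\<in>S. g k) = g k0"
proof -
  have "(\<Sum>\<^sub>\<infinity>k\<in>S. g k) = (\<Sum>\<^sub>\<infinity>k\<in>{k0}. g k)"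
    by (rule infsum_cong_neutral) (use assms in auto)
  then show ?thesis by simp
qed

lemma Bset_disj: assumes "b \<in> Bset n a c k1" "b \<in> Bset n a c k2" shows "k1 = k2"
proof (rule ccontr)
  assume ne: "k1 \<noteq> k2"
  { fix p q assume p: "b \<in> Bset n a c p" and q: "b \<in> Bset n a c q" and pq: "p < q"
    have "bk n a c q \<le> bk n a c (Suc p)" using pq by (intro bk_antimono) simp
    also have "\<dots> \<le> ereal b" using p by (simp add: Bset_def)
    also have "\<dots> < bk n a c q" using q by (simp add: Bset_def)
    finally have False by simp }
  then show False using assms ne by (metis linorder_neqE_nat)
qed

lemma part1: "\<forall>b>0. \<exists>!x. x \<in> Omega n a c \<and> (\<forall>i. 0 \<le> x i) \<and> objF n b x = infval n a c b"
proof (intro allI impI)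
  fix b :: real assume b: "0 < b"
  show "\<exists>!x. x \<in> Omega n a c \<and> (\<forall>i. 0 \<le> x i) \<and> objF n b x = infval n a c b"
  proof (cases "bk n a c 0 \<le> ereal b")
    case True
    then show ?thesis using pieceC[OF b True] by blast
  next
    case False
    then obtain k where k: "enat k < n" "bk n a c (Suc k) \<le> ereal b" "ereal b < bk n a c k"
      using coverage[OF b] by blast
    then show ?thesis using pieceB[OF b k(1) k(2) less_imp_le[OF k(3)]] by blast
  qed
qed

lemma part2: "\<forall>b>0. bk n a c 1 \<le> ereal b \<and> ereal b \<le> bk n a c 0 \<longrightarrow>
        (\<forall>i\<in>Idx n. xopt n a c b i =
            (1 / b) * ((b - ssum n a 0) / dsum n a 0 - ln (a i)))
        \<and> objF n b (xopt n a c b) = ennreal (dsum n a 0 * exp ((ssum n a 0 - b) / dsum n a 0))"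
proof (intro allI impI)
  fix b :: real assume b: "0 < b" and h: "bk n a c 1 \<le> ereal b \<and> ereal b \<le> bk n a c 0"
  have "enat 1 \<le> n" using one_Idx by (simp add: Idx_iff)
  then have n0: "enat 0 < n" by (rule less_le_trans[rotated]) simp
  have h1: "bk n a c (Suc 0) \<le> ereal b" "ereal b \<le> bk n a c 0" using h by simp_all
  note PB = pieceB[OF b n0 h1]
  have P: "xopt n a c b = Y 0 0 ((b - s 0) / d 0) b"
      "objF n b (xopt n a c b) = ennreal (real 0 + d 0 * exp ((s 0 - b) / d 0))"
    using PB by blast+
  show "(\<forall>i\<in>Idx n. xopt n a c b i = (1 / b) * ((b - ssum n a 0) / dsum n a 0 - ln (a i)))
        \<and> objF n b (xopt n a c b) = ennreal (dsum n a 0 * exp ((ssum n a 0 - b) / dsum n a 0))"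
    using P by (auto simp: Y_def Idx_iff)
qed

lemma part3: "\<forall>b>0. \<forall>k. 1 \<le> k \<and> enat k < n \<and>
          bk n a c (Suc k) \<le> ereal b \<and> ereal b < bk n a c k \<longrightarrow>
        (\<forall>i\<in>Idx n. i \<le> k \<longrightarrow> xopt n a c b i = 0)
        \<and> (\<forall>i\<in>Idx n. k < i \<longrightarrow> xopt n a c b i =
            (1 / b) * ((b - ssum n a k) / dsum n a k - ln (a i)))
        \<and> objF n b (xopt n a c b) =
            ennreal (real k + dsum n a k * exp ((ssum n a k - b) / dsum n a k))"
proof (intro allI impI)
  fix b :: real and k assume b: "0 < b" and h: "1 \<le> k \<and> enat k < n \<and>
          bk n a c (Suc k) \<le> ereal b \<and> ereal b < bk n a c k"
  have hk: "enat k < n" "bk n a c (Suc k) \<le> ereal b" "ereal b \<le> bk n a c k" using h by (simp_all add: less_imp_le)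
  note PB = pieceB[OF b hk]
  have P: "xopt n a c b = Y k 0 ((b - s k) / d k) b"
      "objF n b (xopt n a c b) = ennreal (real k + d k * exp ((s k - b) / d k))"
    using PB by blast+
  show "(\<forall>i\<in>Idx n. i \<le> k \<longrightarrow> xopt n a c b i = 0)
        \<and> (\<forall>i\<in>Idx n. k < i \<longrightarrow> xopt n a c b i =
            (1 / b) * ((b - ssum n a k) / dsum n a k - ln (a i)))
        \<and> objF n b (xopt n a c b) =
            ennreal (real k + dsum n a k * exp ((ssum n a k - b) / dsum n a k))"
    using P by (auto simp: Y_def)
qed

lemma part4: "\<forall>b>0. bk n a c 0 < \<infinity> \<and> bk n a c 0 < ereal b \<longrightarrow>
        xopt n a c b 1 = c
        \<and> (\<forall>i\<in>Idx n - {1}. xopt n a c b i =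
            (1 / b) * ((b * (1 - a 1 * c) - ssum n a 1) / dsum n a 1 - ln (a i)))
        \<and> objF n b (xopt n a c b) =
            ennreal (exp (- b * c) *
              (1 + dsum n a 1 * exp ((ssum n a 1 - b * (1 - c * dsum n a 0)) / dsum n a 1)))"
proof (intro allI impI)
  fix b :: real assume b: "0 < b" and h: "bk n a c 0 < \<infinity> \<and> bk n a c 0 < ereal b"
  have P: "xopt n a c b = Y 1 c ((b * (1 - a 1 * c) - s 1) / d 1) b"
      "objF n b (xopt n a c b) = ennreal (exp (- b * c) * (1 + d 1 * exp ((s 1 - b * (1 - c * d 0)) / d 1)))"
    using pieceC[OF b less_imp_le[OF conjunct2[OF h]]] by blast+
  have i1: "\<And>i. i \<in> Idx n - {1} \<Longrightarrow> \<not> i \<le> 1" by (auto simp: Idx_iff)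
  show "xopt n a c b 1 = c
        \<and> (\<forall>i\<in>Idx n - {1}. xopt n a c b i =
            (1 / b) * ((b * (1 - a 1 * c) - ssum n a 1) / dsum n a 1 - ln (a i)))
        \<and> objF n b (xopt n a c b) =
            ennreal (exp (- b * c) *
              (1 + dsum n a 1 * exp ((ssum n a 1 - b * (1 - c * dsum n a 0)) / dsum n a 1)))"
    using P one_Idx i1 by (auto simp: Y_def)
qed


lemma closed_ge: "closed {t::real. e \<le> ereal t}"
  by (rule closed_Collect_le[OF continuous_on_const continuous_on_ereal[OF continuous_on_id]])

lemma closed_le: "closed {t::real. ereal t \<le> e}"
  by (rule closed_Collect_le[OF continuous_on_ereal[OF continuous_on_id] continuous_on_const])

lemma part5: "\<forall>i\<in>Idx n. continuous_on {0<..} (\<lambda>b. xopt n a c b i)"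
proof
  fix i assume iI: "i \<in> Idx n"
  have "isCont (\<lambda>b. xopt n a c b i) b0" if b0: "0 < b0" for b0
  proof -
    define e where "e = b0 / 2"
    have e0: "0 < e" using b0 by (simp add: e_def)
    obtain K where K: "1 \<le> K" "enat K \<le> n" "bb K < e" using bb_small[OF e0] by blast
    define P where "P k = {e..} \<inter> {t. bk n a c (Suc k) \<le> ereal t} \<inter> {t. ereal t \<le> bk n a c k}" for k
    define PC where "PC = {e..} \<inter> {t. bk n a c 0 \<le> ereal t}"
    have cover: "{e..} = (\<Union>k\<in>{..<K}. P k) \<union> PC"
    proof
      show "(\<Union>k\<in>{..<K}. P k) \<union> PC \<subseteq> {e..}" by (auto simp: P_def PC_def)
      show "{e..} \<subseteq> (\<Union>k\<in>{..<K}. P k) \<union> PC"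
      proof
        fix t assume t: "t \<in> {e..}"
        then have t0: "0 < t" using e0 by simp
        show "t \<in> (\<Union>k\<in>{..<K}. P k) \<union> PC"
        proof (cases "bk n a c 0 \<le> ereal t")
          case True then show ?thesis using t by (simp add: PC_def)
        next
          case False
          then obtain k where k: "enat k < n" "bk n a c (Suc k) \<le> ereal t" "ereal t < bk n a c k"
            using coverage[OF t0] by blast
          have "k < K"
          proof (rule ccontr)
            assume "\<not> k < K"
            then have "bk n a c k \<le> bk n a c K" by (intro bk_antimono) simp
            also have "\<dots> = ereal (bb K)" using K(1) by (rule bk_eq)
            also have "\<dots> \<le> ereal t" using K(3) t by simp
            finally show False using k(3) by simp
          qed
          then show ?thesis using k t by (auto simp: P_def)
        qed
      qed
    qed
    have clP: "closed (P k)" for k unfolding P_def by (intro closed_Int closed_atLeast closed_ge closed_le)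
    have clPC: "closed PC" unfolding PC_def by (intro closed_Int closed_atLeast closed_ge)
    have cP: "continuous_on (P k) (\<lambda>b. xopt n a c b i)" if kK: "k \<in> {..<K}" for k
    proof -
      have "enat k < enat K" using kK by simp
      then have kn: "enat k < n" using K(2) by (rule less_le_trans)
      have eq: "(if i \<le> k then 0 else ((t - s k) / d k - ln (a i)) / t) = xopt n a c t i" if t: "t \<in> P k" for t
      proof -
        have t0: "0 < t" using t e0 by (simp add: P_def)
        have "xopt n a c t = Y k 0 ((t - s k) / d k) t"
          using pieceB[OF t0 kn] t by (simp add: P_def)
        then show ?thesis using iI by (simp add: Y_def)
      qed
      have "continuous_on (P k) (\<lambda>t. if i \<le> k then 0 else ((t - s k) / d k - ln (a i)) / t)"
      proof (cases "i \<le> k")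
        case True then show ?thesis by simp
      next
        case False
        have "continuous_on (P k) (\<lambda>t. ((t - s k) / d k - ln (a i)) / t)"
          by (intro continuous_intros) (use e0 d_pos[OF kn] in \<open>auto simp: P_def\<close>)
        then show ?thesis using False by simp
      qed
      then show ?thesis using eq by (rule continuous_on_eq)
    qed
    have cPC: "continuous_on PC (\<lambda>b. xopt n a c b i)"
    proof -
      have "enat 1 < 2" by (simp add: e1 e2[symmetric] del: enat_numeral)
      then have "enat 1 < n" using n2 by (rule less_le_trans)
      then have d1pos: "0 < d 1" by (rule d_pos)
      have eq: "(if i \<le> 1 then c else ((t * (1 - a 1 * c) - s 1) / d 1 - ln (a i)) / t) = xopt n a c t i"
        if t: "t \<in> PC" for t
      proof -
        have t0: "0 < t" using t e0 by (simp add: PC_def)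
        have "bk n a c 0 \<le> ereal t" using t by (simp add: PC_def)
        then have "xopt n a c t = Y 1 c ((t * (1 - a 1 * c) - s 1) / d 1) t"
          using pieceC[OF t0] by blast
        then show ?thesis using iI by (simp add: Y_def)
      qed
      have "continuous_on PC (\<lambda>t. if i \<le> 1 then c else ((t * (1 - a 1 * c) - s 1) / d 1 - ln (a i)) / t)"
      proof (cases "i \<le> 1")
        case True then show ?thesis by simp
      next
        case False
        have "continuous_on PC (\<lambda>t. ((t * (1 - a 1 * c) - s 1) / d 1 - ln (a i)) / t)"
          by (intro continuous_intros) (use e0 d1pos in \<open>auto simp: PC_def\<close>)
        then show ?thesis using False by simp
      qed
      then show ?thesis using eq by (rule continuous_on_eq)
    qed
    have "continuous_on ((\<Union>k\<in>{..<K}. P k) \<union> PC) (\<lambda>b. xopt n a c b i)"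
    proof (rule continuous_on_closed_Un)
      show "closed (\<Union>k\<in>{..<K}. P k)" using clP by (intro closed_UN) auto
      show "continuous_on (\<Union>k\<in>{..<K}. P k) (\<lambda>b. xopt n a c b i)"
        by (rule continuous_on_closed_Union) (use clP cP in auto)
    qed (use clPC cPC in auto)
    then have "continuous_on {e..} (\<lambda>b. xopt n a c b i)" unfolding cover .
    then have "continuous_on {e<..} (\<lambda>b. xopt n a c b i)" by (rule continuous_on_subset) auto
    moreover have "b0 \<in> {e<..}" using b0 by (simp add: e_def)
    ultimately show ?thesis using continuous_on_eq_continuous_at[OF open_greaterThan] by blast
  qed
  then show "continuous_on {0<..} (\<lambda>b. xopt n a c b i)"
    by (intro continuous_at_imp_continuous_on) auto
qed


lemma part6: "0 < c \<longrightarrow> (\<forall>b>0. infval n a c b = ennreal (zc n a c b))"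
proof (intro impI allI)
  fix b :: real assume b: "0 < b"
  let ?g = "\<lambda>k. indicator (Bset n a c k) b * (real k + d k * exp ((s k - b) / d k))"
  show "infval n a c b = ennreal (zc n a c b)"
  proof (cases "bk n a c 0 \<le> ereal b")
    case True
    have nb: "b \<notin> Bset n a c k" for k
    proof
      assume "b \<in> Bset n a c k"
      then have "ereal b < bk n a c k" by (simp add: Bset_def)
      also have "\<dots> \<le> bk n a c 0" by (rule bk_antimono) simp
      finally show False using True by simp
    qed
    have g0: "?g = (\<lambda>k. 0)" by (rule ext) (simp add: nb)
    have inC: "b \<in> Bc n a c" using True by (simp add: Bc_def)
    have "zc n a c b = exp (- b * c) * (1 + d 1 * exp ((s 1 - b * (1 - c * d 0)) / d 1))"
      unfolding zc_def g0 using inC by simp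
    moreover have "infval n a c b = ennreal (exp (- b * c) * (1 + d 1 * exp ((s 1 - b * (1 - c * d 0)) / d 1)))"
      using pieceC[OF b True] by blast
    ultimately show ?thesis by simp
  next
    case False
    then obtain k0 where k: "enat k0 < n" "bk n a c (Suc k0) \<le> ereal b" "ereal b < bk n a c k0"
      using coverage[OF b] by blast
    have inB: "b \<in> Bset n a c k0" using k by (simp add: Bset_def)
    have nC: "b \<notin> Bc n a c"
    proof
      assume "b \<in> Bc n a c"
      then have "bk n a c 0 \<le> ereal b" by (simp add: Bc_def)
      then show False using False by simp
    qed
    have "(\<Sum>\<^sub>\<infinity>k\<in>{k. enat k < n}. ?g k) = ?g k0"
    proof (rule infsum_single_nat)
      show "k0 \<in> {k. enat k < n}" using k by simp
      fix k assume "k \<in> {k. enat k < n}" "k \<noteq> k0"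
      then have "b \<notin> Bset n a c k" using Bset_disj[OF inB] by blast
      then show "?g k = 0" by simp
    qed
    then have "zc n a c b = real k0 + d k0 * exp ((s k0 - b) / d k0)"
      unfolding zc_def using inB nC by simp
    moreover have "infval n a c b = ennreal (real k0 + d k0 * exp ((s k0 - b) / d k0))"
      using pieceB[OF b k(1) k(2) less_imp_le[OF k(3)]] by blast
    ultimately show ?thesis by simp
  qed
qed

lemma part7: "c = 0 \<longrightarrow> bk n a c 1 = bk n a c 0 \<and> (\<forall>b>0. infval n a c b = ennreal (z0 n a b))"
proof (intro impI conjI allI)
  assume c00: "c = 0"
  have x1: "bk n a c 1 = ereal (bb 1)" by (rule bk_eq) simp
  have x0: "bk n a c 0 = ereal (bb 1)" unfolding bk0 using c00 by simp
  show b10: "bk n a c 1 = bk n a c 0" using x1 x0 by simp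
  fix b :: real assume b: "0 < b"
  let ?g = "\<lambda>k. indicator (Bset' n a 0 k) b * (real k + d k * exp ((s k - b) / d k))"
  let ?S = "{k. 1 \<le> k \<and> enat k < n}"
  have n1: "enat 1 < n"
  proof -
    have "enat 1 < 2" by (simp add: e1 e2[symmetric] del: enat_numeral)
    then show ?thesis using n2 by (rule less_le_trans)
  qed
  have B'1: "b \<in> Bset' n a 0 1 \<longleftrightarrow> bk n a c 2 \<le> ereal b" using c00 by (simp add: Bset'_def)
  have B'k: "k \<noteq> 1 \<Longrightarrow> b \<in> Bset' n a 0 k \<longleftrightarrow> b \<in> Bset n a c k" for k using c00 by (simp add: Bset'_def)
  show "infval n a c b = ennreal (z0 n a b)"
  proof (cases "bk n a c 0 \<le> ereal b")
    case True
    have "(\<Sum>\<^sub>\<infinity>k\<in>?S. ?g k) = ?g 1"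
    proof (rule infsum_single_nat)
      show "1 \<in> ?S" using n1 by simp
      fix k assume kS: "k \<in> ?S" "k \<noteq> 1"
      have "b \<notin> Bset n a c k"
      proof
        assume "b \<in> Bset n a c k"
        then have "ereal b < bk n a c k" by (simp add: Bset_def)
        also have "\<dots> \<le> bk n a c 0" by (rule bk_antimono) simp
        finally show False using True by simp
      qed
      then show "?g k = 0" using B'k[OF kS(2)] by simp
    qed
    moreover have "b \<in> Bset' n a 0 1"
    proof -
      have "bk n a c 2 \<le> bk n a c 0" by (rule bk_antimono) simp
      then show ?thesis using True B'1 by simp
    qed
    ultimately have "z0 n a b = 1 + d 1 * exp ((s 1 - b) / d 1)" unfolding z0_def by simp
    moreover have "infval n a c b = ennreal (exp (- b * c) * (1 + d 1 * exp ((s 1 - b * (1 - c * d 0)) / d 1)))"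
      using pieceC[OF b True] by blast
    ultimately show ?thesis using c00 by simp
  next
    case False
    then obtain k0 where k: "enat k0 < n" "bk n a c (Suc k0) \<le> ereal b" "ereal b < bk n a c k0"
      using coverage[OF b] by blast
    have k01: "1 \<le> k0"
    proof (rule ccontr)
      assume "\<not> 1 \<le> k0"
      then have "k0 = 0" by simp
      then show False using k b10 by simp
    qed
    have inB: "b \<in> Bset n a c k0" using k by (simp add: Bset_def)
    have inB': "b \<in> Bset' n a 0 k0"
    proof (cases "k0 = 1")
      case True then show ?thesis using B'1 k by (simp add: numeral_2_eq_2)
    next
      case False then show ?thesis using B'k inB by simp
    qed
    have "(\<Sum>\<^sub>\<infinity>k\<in>?S. ?g k) = ?g k0"
    proof (rule infsum_single_nat)
      show "k0 \<in> ?S" using k k01 by simp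
      fix k assume kS: "k \<in> ?S" "k \<noteq> k0"
      have "b \<notin> Bset' n a 0 k"
      proof (cases "k = 1")
        case True
        then have k02: "2 \<le> k0" using kS k01 by simp
        have "ereal b < bk n a c k0" by (rule k(3))
        also have "\<dots> \<le> bk n a c 2" using k02 by (rule bk_antimono)
        finally show ?thesis using B'1 True by simp
      next
        case False
        then show ?thesis using B'k[OF False] Bset_disj[OF inB] kS(2) by blast
      qed
      then show "?g k = 0" by simp
    qed
    then have "z0 n a b = real k0 + d k0 * exp ((s k0 - b) / d k0)" unfolding z0_def using inB' by simp
    moreover have "infval n a c b = ennreal (real k0 + d k0 * exp ((s k0 - b) / d k0))"
      using pieceB[OF b k(1) k(2) less_imp_le[OF k(3)]] by blast
    ultimately show ?thesis by simp
  qed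
qed

lemma main:
  "(\<forall>b>0. \<exists>!x. x \<in> Omega n a c \<and> (\<forall>i. 0 \<le> x i) \<and> objF n b x = infval n a c b)
   \<and> (\<forall>b>0. bk n a c 1 \<le> ereal b \<and> ereal b \<le> bk n a c 0 \<longrightarrow>
        (\<forall>i\<in>Idx n. xopt n a c b i =
            (1 / b) * ((b - ssum n a 0) / dsum n a 0 - ln (a i)))
        \<and> objF n b (xopt n a c b) = ennreal (dsum n a 0 * exp ((ssum n a 0 - b) / dsum n a 0)))
   \<and> (\<forall>b>0. \<forall>k. 1 \<le> k \<and> enat k < n \<and>
          bk n a c (Suc k) \<le> ereal b \<and> ereal b < bk n a c k \<longrightarrow>
        (\<forall>i\<in>Idx n. i \<le> k \<longrightarrow> xopt n a c b i = 0)
        \<and> (\<forall>i\<in>Idx n. k < i \<longrightarrow> xopt n a c b i =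
            (1 / b) * ((b - ssum n a k) / dsum n a k - ln (a i)))
        \<and> objF n b (xopt n a c b) =
            ennreal (real k + dsum n a k * exp ((ssum n a k - b) / dsum n a k)))
   \<and> (\<forall>b>0. bk n a c 0 < \<infinity> \<and> bk n a c 0 < ereal b \<longrightarrow>
        xopt n a c b 1 = c
        \<and> (\<forall>i\<in>Idx n - {1}. xopt n a c b i =
            (1 / b) * ((b * (1 - a 1 * c) - ssum n a 1) / dsum n a 1 - ln (a i)))
        \<and> objF n b (xopt n a c b) =
            ennreal (exp (- b * c) *
              (1 + dsum n a 1 * exp ((ssum n a 1 - b * (1 - c * dsum n a 0)) / dsum n a 1))))
   \<and> (\<forall>i\<in>Idx n. continuous_on {0<..} (\<lambda>b. xopt n a c b i))
   \<and> (0 < c \<longrightarrow> (\<forall>b>0. infval n a c b = ennreal (zc n a c b)))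
   \<and> (c = 0 \<longrightarrow> bk n a c 1 = bk n a c 0 \<and> (\<forall>b>0. infval n a c b = ennreal (z0 n a b)))"
  using part1 part2 part3 part4 part5 part6 part7 by blast


end

theorem lemma2:
  fixes n :: enat and a :: "nat \<Rightarrow> real" and c :: real
  assumes n2: "2 \<le> n"
    and apos: "\<forall>i\<in>Idx n. 0 < a i"
    and anoninc: "\<forall>i\<in>Idx n. \<forall>j\<in>Idx n. i \<le> j \<longrightarrow> a j \<le> a i"
    and asum: "a summable_on Idx n" "(\<Sum>\<^sub>\<infinity>i\<in>Idx n. a i) \<le> 1"
    and eta_sum: "(\<lambda>i. eta (a i)) summable_on Idx n"
    and c0: "0 \<le> c"
  shows
    "(\<forall>b>0. \<exists>!x. x \<in> Omega n a c \<and> (\<forall>i. 0 \<le> x i) \<and> objF n b x = infval n a c b)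
   \<and> (\<forall>b>0. bk n a c 1 \<le> ereal b \<and> ereal b \<le> bk n a c 0 \<longrightarrow>
        (\<forall>i\<in>Idx n. xopt n a c b i =
            (1 / b) * ((b - ssum n a 0) / dsum n a 0 - ln (a i)))
        \<and> objF n b (xopt n a c b) = ennreal (dsum n a 0 * exp ((ssum n a 0 - b) / dsum n a 0)))
   \<and> (\<forall>b>0. \<forall>k. 1 \<le> k \<and> enat k < n \<and>
          bk n a c (Suc k) \<le> ereal b \<and> ereal b < bk n a c k \<longrightarrow>
        (\<forall>i\<in>Idx n. i \<le> k \<longrightarrow> xopt n a c b i = 0)
        \<and> (\<forall>i\<in>Idx n. k < i \<longrightarrow> xopt n a c b i =
            (1 / b) * ((b - ssum n a k) / dsum n a k - ln (a i)))
        \<and> objF n b (xopt n a c b) =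
            ennreal (real k + dsum n a k * exp ((ssum n a k - b) / dsum n a k)))
   \<and> (\<forall>b>0. bk n a c 0 < \<infinity> \<and> bk n a c 0 < ereal b \<longrightarrow>
        xopt n a c b 1 = c
        \<and> (\<forall>i\<in>Idx n - {1}. xopt n a c b i =
            (1 / b) * ((b * (1 - a 1 * c) - ssum n a 1) / dsum n a 1 - ln (a i)))
        \<and> objF n b (xopt n a c b) =
            ennreal (exp (- b * c) *
              (1 + dsum n a 1 * exp ((ssum n a 1 - b * (1 - c * dsum n a 0)) / dsum n a 1))))
   \<and> (\<forall>i\<in>Idx n. continuous_on {0<..} (\<lambda>b. xopt n a c b i))
   \<and> (0 < c \<longrightarrow> (\<forall>b>0. infval n a c b = ennreal (zc n a c b)))
   \<and> (c = 0 \<longrightarrow> bk n a c 1 = bk n a c 0 \<and> (\<forall>b>0. infval n a c b = ennreal (z0 n a b)))"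
proof -
  have "L n a c" unfolding L_def using n2 apos anoninc asum eta_sum c0 by blast
  then show ?thesis by (rule L.main)
qed

end
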